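(* Let $X$ be a real Hilbert space, $f,g\in\Gamma_0(X)$, $T:=\operatorname{Id}-\operatorname{P}_f+\operatorname{P}_g\operatorname{R}_f$, $v:=P_{\overline{\operatorname{ran}}(\operatorname{Id}-T)}(0)$, $D:=\operatorname{dom}\partial f-\operatorname{dom}\partial g$, $R:=\operatorname{ran}\partial f+\operatorname{ran}\partial g$. Assume $\overline{\operatorname{ran}}(\operatorname{Id}-T)=\overline{D\cap R}=\overline D\cap\overline R$ and $P_{\overline R}(0)=0$. Let $x\in X$ and $y\in\operatorname{dom}f\cap(v+\operatorname{dom}g)$. Then $0\ge\langle y-\operatorname{P}_fx,v\rangle$, $f(y)\ge f(\operatorname{P}_fx)+\langle y-\operatorname{P}_fx,\ v+\operatorname{P}_{f^*}x\rangle$, $g(y-v)\ge g(\operatorname{P}_g\operatorname{R}_fx)+\langle y-\operatorname{P}_g\operatorname{R}_fx-v,\ \operatorname{P}_fx-\operatorname{P}_g\operatorname{R}_fx-v\rangle+\langle -y+v+\operatorname{P}_g\operatorname{R}_fx,\ v+\operatorname{P}_{f^*}x\rangle$.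
   Context: $\Gamma_0(X)$ is the set of convex, lower semicontinuous, proper functions on $X$; $f^*$ is the Fenchel conjugate. $\operatorname{P}_h:=(\operatorname{Id}+\partial h)^{-1}$ is the proximal mapping (so $\operatorname{P}_{f^*}=\operatorname{Id}-\operatorname{P}_f$), $\operatorname{R}_h:=2\operatorname{P}_h-\operatorname{Id}$. $P_S$ is the projection onto a nonempty closed convex set $S$. *)

theory Defs
  imports "HOL-Analysis.Analysis"
begin

definition edom :: "('a \<Rightarrow> ereal) \<Rightarrow> 'a set" where
  "edom f = {x. f x < \<infinity>}"

definition proper_fun :: "('a \<Rightarrow> ereal) \<Rightarrow> bool" where
  "proper_fun f \<longleftrightarrow> (\<forall>x. f x \<noteq> -\<infinity>) \<and> (\<exists>x. f x < \<infinity>)"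

definition epigraph :: "('a \<Rightarrow> ereal) \<Rightarrow> ('a \<times> real) set" where
  "epigraph f = {(x, r). f x \<le> ereal r}"

text \<open>Gamma_0(X): convex (convex epigraph), lower semicontinuous (closed epigraph), proper.\<close>
definition Gamma0 :: "('a::real_normed_vector \<Rightarrow> ereal) \<Rightarrow> bool" where
  "Gamma0 f \<longleftrightarrow> convex (epigraph f) \<and> closed (epigraph f) \<and> proper_fun f"

definition subdiff :: "('a::real_inner \<Rightarrow> ereal) \<Rightarrow> 'a \<Rightarrow> 'a set" where
  "subdiff f x = {u. f x \<noteq> \<infinity> \<and> f x \<noteq> -\<infinity> \<and>
                      (\<forall>y. f x + ereal (inner u (y - x)) \<le> f y)}"

definition dom_subdiff :: "('a::real_inner \<Rightarrow> ereal) \<Rightarrow> 'a set" where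
  "dom_subdiff f = {x. subdiff f x \<noteq> {}}"

definition ran_subdiff :: "('a::real_inner \<Rightarrow> ereal) \<Rightarrow> 'a set" where
  "ran_subdiff f = (\<Union>x. subdiff f x)"

definition fconj :: "('a::real_inner \<Rightarrow> ereal) \<Rightarrow> 'a \<Rightarrow> ereal" where
  "fconj f u = (SUP x. ereal (inner u x) - f x)"

definition prox :: "('a::real_inner \<Rightarrow> ereal) \<Rightarrow> 'a \<Rightarrow> 'a" where
  "prox h x = (THE p. x - p \<in> subdiff h p)"

definition rrefl :: "('a::real_inner \<Rightarrow> ereal) \<Rightarrow> 'a \<Rightarrow> 'a" where
  "rrefl h x = 2 *\<^sub>R prox h x - x"

text \<open>Projection onto a nonempty closed convex set S (the unique nearest point).
  The library's closest_point requires heine_borel, so we define it for Hilbert spaces.\<close>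
definition proj :: "'a::real_inner set \<Rightarrow> 'a \<Rightarrow> 'a" where
  "proj S x = (THE p. p \<in> S \<and> (\<forall>q\<in>S. dist x p \<le> dist x q))"

end

theory Submission
  imports Defs
begin

lemma G_fin:
  assumes "Gamma0 h" "h x < \<infinity>"
  shows "h x = ereal (real_of_ereal (h x))"
  using assms by (cases "h x") (auto simp: Gamma0_def proper_fun_def)

lemma G_conv:
  fixes h :: "'a::real_normed_vector \<Rightarrow> ereal"
  assumes G: "Gamma0 h" and a: "h a < \<infinity>" and b: "h b < \<infinity>" and t: "0 \<le> t" "t \<le> 1"
  shows "h ((1 - t) *\<^sub>R a + t *\<^sub>R b) \<le> ereal ((1 - t) * real_of_ereal (h a) + t * real_of_ereal (h b))"
proof -
  have ea: "(a, real_of_ereal (h a)) \<in> epigraph h" using G_fin[OF G a] by (simp add: epigraph_def)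
  have eb: "(b, real_of_ereal (h b)) \<in> epigraph h" using G_fin[OF G b] by (simp add: epigraph_def)
  have "convex (epigraph h)" using G by (simp add: Gamma0_def)
  then have "(1 - t) *\<^sub>R (a, real_of_ereal (h a)) + t *\<^sub>R (b, real_of_ereal (h b)) \<in> epigraph h"
    using ea eb t by (intro convexD) auto
  then show ?thesis by (simp add: epigraph_def)
qed

lemma G_sub_closed:
  fixes h :: "'a::real_normed_vector \<Rightarrow> ereal"
  assumes G: "Gamma0 h"
  shows "closed {z. h z \<le> ereal r}"
proof -
  have "{z. h z \<le> ereal r} = (\<lambda>z. (z, r)) -` epigraph h" by (auto simp: epigraph_def)
  moreover have "closed ((\<lambda>z. (z, r)) -` epigraph h)"
    using G by (intro continuous_closed_vimage) (auto simp: Gamma0_def intro!: continuous_intros)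
  ultimately show ?thesis by simp
qed

lemma G_growth:
  fixes h :: "'a::real_normed_vector \<Rightarrow> ereal"
  assumes G: "Gamma0 h"
  shows "\<exists>A B. B \<ge> 0 \<and> (\<forall>z. ereal (A - B * norm z) \<le> h z)"
proof -
  obtain x0 where x0: "h x0 < \<infinity>" using G by (auto simp: Gamma0_def proper_fun_def)
  define a where "a = real_of_ereal (h x0)"
  have hx0: "h x0 = ereal a" using G_fin[OF G x0] a_def by simp
  have "open (- {z. h z \<le> ereal (a - 1)})" using G_sub_closed[OF G] by auto
  moreover have "x0 \<in> - {z. h z \<le> ereal (a - 1)}" using hx0 by simp
  ultimately obtain \<delta> where d: "\<delta> > 0" "ball x0 \<delta> \<subseteq> - {z. h z \<le> ereal (a - 1)}"
    using open_contains_ball by blast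
  have near: "h z > ereal (a - 1)" if "dist x0 z < \<delta>" for z
    using d that by (auto simp: subset_eq not_le)
  define d where "d = \<delta> / 2"
  have dpos: "d > 0" "d < \<delta>" using d by (auto simp: d_def)
  have key: "ereal (a - 1 - norm (z - x0) / d) \<le> h z" for z
  proof (cases "h z < \<infinity>")
    case False then show ?thesis by simp
  next
    case True
    define b where "b = real_of_ereal (h z)"
    have hz: "h z = ereal b" using G_fin[OF G True] b_def by simp
    show ?thesis
    proof (cases "norm (z - x0) < \<delta>")
      case True
      then have "h z > ereal (a - 1)" using near by (simp add: dist_norm norm_minus_commute)
      moreover have "norm (z - x0) / d \<ge> 0" using dpos by simp
      ultimately show ?thesis using hz by simp
    next
      case False
      define n where "n = norm (z - x0)"
      have n: "n \<ge> \<delta>" using False n_def by simp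
      define s where "s = d / n"
      have s: "0 < s" "s \<le> 1" using dpos n d by (auto simp: s_def)
      define w where "w = (1 - s) *\<^sub>R x0 + s *\<^sub>R z"
      have "w - x0 = s *\<^sub>R (z - x0)" by (simp add: w_def algebra_simps)
      then have "dist x0 w = s * n" using s by (simp add: dist_norm norm_minus_commute n_def)
      also have "\<dots> = d" using n d by (simp add: s_def)
      finally have "h w > ereal (a - 1)" using near dpos by simp
      moreover have "h w \<le> ereal ((1 - s) * a + s * b)"
        using G_conv[OF G x0 True, of s] s hz hx0 by (simp add: w_def)
      ultimately have "ereal (a - 1) < ereal ((1 - s) * a + s * b)" by (rule less_le_trans)
      then have "a - 1 < (1 - s) * a + s * b" by simp
      then have "s * a - 1 < s * b" by (simp add: algebra_simps)
      then have "a - 1 / s < b" using s by (simp add: field_simps)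
      moreover have "1 / s = n / d" using s dpos n d by (simp add: s_def)
      ultimately show ?thesis using hz n_def by simp
    qed
  qed
  show ?thesis
  proof (intro exI conjI allI)
    show "1 / d \<ge> 0" using dpos by simp
    fix z
    have "norm (z - x0) \<le> norm z + norm x0" by (rule norm_triangle_ineq4)
    then have "(norm (z - x0)) / d \<le> (norm z + norm x0) / d" using dpos by (simp add: divide_right_mono)
    then have "a - 1 - norm x0 / d - 1 / d * norm z \<le> a - 1 - norm (z - x0) / d"
      by (simp add: add_divide_distrib)
    then show "ereal (a - 1 - norm x0 / d - 1 / d * norm z) \<le> h z"
      using key[of z] order_trans by (metis ereal_less_eq(3))
  qed
qed

lemma parallelogram_mid:
  fixes a b :: "'a::real_inner"
  shows "(norm ((1/2) *\<^sub>R a + (1/2) *\<^sub>R b))\<^sup>2 = (1/2) * (norm a)\<^sup>2 + (1/2) * (norm b)\<^sup>2 - (1/4) * (norm (a - b))\<^sup>2"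
  by (simp add: power2_norm_eq_inner inner_add_left inner_add_right inner_diff_left inner_diff_right inner_commute algebra_simps)

lemma aux_lin: "a \<le> c \<Longrightarrow> b \<le> c \<Longrightarrow> d \<le> (x+y)/2 - m \<Longrightarrow> x < m + a \<Longrightarrow> y < m + b \<Longrightarrow> d < (c::real)"
  by argo

lemma lim_1n: "(\<lambda>n. 1 / (real n + 1)) \<longlonglongrightarrow> 0"
  using LIMSEQ_inverse_real_of_nat by (simp add: inverse_eq_divide add.commute)

lemma G_min:
  fixes h :: "'a::{real_inner,complete_space} \<Rightarrow> ereal"
  assumes G: "Gamma0 h" and mu: "\<mu> > 0"
  shows "\<exists>p. h p < \<infinity> \<and> (\<forall>z. h z < \<infinity> \<longrightarrow>
     real_of_ereal (h p) + \<mu>/2 * (norm (p - x))\<^sup>2 \<le> real_of_ereal (h z) + \<mu>/2 * (norm (z - x))\<^sup>2)"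
proof -
  define F where "F z = real_of_ereal (h z) + \<mu>/2 * (norm (z - x))\<^sup>2" for z
  define S where "S = {z. h z < \<infinity>}"
  obtain z0 where z0: "z0 \<in> S" using G by (auto simp: Gamma0_def proper_fun_def S_def)
  obtain A B where AB: "B \<ge> 0" "\<And>z. ereal (A - B * norm z) \<le> h z" using G_growth[OF G] by blast
  define L where "L = A - B * norm x - B\<^sup>2 / (2 * \<mu>)"
  have lowF: "L \<le> F z" if "z \<in> S" for z
  proof -
    have hz: "h z = ereal (real_of_ereal (h z))" using G_fin[OF G] that by (simp add: S_def)
    have 1: "A - B * norm z \<le> real_of_ereal (h z)" using AB(2)[of z] hz by (metis ereal_less_eq(3))
    define t where "t = norm (z - x)"
    have "norm z \<le> norm x + t" unfolding t_def by (metis add.commute norm_triangle_sub)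
    then have 2: "B * norm z \<le> B * norm x + B * t" using AB(1) by (metis distrib_left mult_left_mono)
    have "0 \<le> (\<mu> * t - B)\<^sup>2" by simp
    then have 3: "- B * t + \<mu>/2 * t\<^sup>2 \<ge> - B\<^sup>2 / (2 * \<mu>)" using mu
      by (simp add: field_simps power2_eq_square)
    show ?thesis using 1 2 3 unfolding F_def L_def t_def by linarith
  qed
  define m where "m = Inf (F ` S)"
  have bdd: "bdd_below (F ` S)" by (rule bdd_belowI2[where m=L]) (rule lowF)
  have ne: "F ` S \<noteq> {}" using z0 by auto
  have mle: "m \<le> F z" if "z \<in> S" for z using bdd that unfolding m_def by (auto intro: cInf_lower)
  have "\<exists>z\<in>S. F z < m + 1 / (real n + 1)" for n
  proof -
    have "m < m + 1 / (real n + 1)" by simp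
    then obtain y where "y \<in> F ` S" "y < m + 1 / (real n + 1)" using cInf_lessD[OF ne] unfolding m_def by blast
    then show ?thesis by auto
  qed
  then obtain zs where zs: "\<And>n. zs n \<in> S" "\<And>n. F (zs n) < m + 1 / (real n + 1)" by metis
  have mid: "\<mu>/8 * (norm (a - b))\<^sup>2 \<le> (F a + F b)/2 - m" if "a \<in> S" "b \<in> S" for a b
  proof -
    define c where "c = (1 - 1/2) *\<^sub>R a + (1/2) *\<^sub>R b"
    have ha: "h a < \<infinity>" and hb: "h b < \<infinity>" using that by (auto simp: S_def)
    have hc: "h c \<le> ereal ((1 - 1/2) * real_of_ereal (h a) + (1/2) * real_of_ereal (h b))"
      using G_conv[OF G ha hb, of "1/2"] by (simp add: c_def)
    then have cS: "c \<in> S" by (auto simp: S_def intro: le_less_trans)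
    have hc': "real_of_ereal (h c) \<le> (1/2) * real_of_ereal (h a) + (1/2) * real_of_ereal (h b)"
      using hc G_fin[OF G, of c] cS by (simp add: S_def) (metis ereal_less_eq(3))
    have "c - x = (1/2) *\<^sub>R (a - x) + (1/2) *\<^sub>R (b - x)" by (simp add: c_def algebra_simps flip: scaleR_add_left)
    then have nc: "(norm (c - x))\<^sup>2 = (1/2) * (norm (a - x))\<^sup>2 + (1/2) * (norm (b - x))\<^sup>2 - (1/4) * (norm (a - b))\<^sup>2"
      using parallelogram_mid[of "a - x" "b - x"] by simp
    have "m \<le> F c" using mle cS by simp
    then show ?thesis using hc' nc mu unfolding F_def by (simp add: algebra_simps)
  qed
  have cauchy: "Cauchy zs"
  proof (rule CauchyI)
    fix e :: real assume e: "e > 0"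
    obtain M :: nat where M: "1 / (real M + 1) < \<mu> * e\<^sup>2 / 8"
    proof -
      have "\<mu> * e\<^sup>2 / 8 > 0" using e mu by simp
      then obtain M where "inverse (real (Suc M)) < \<mu> * e\<^sup>2 / 8" using reals_Archimedean by blast
      then show ?thesis using that[of M] by (simp add: inverse_eq_divide add.commute)
    qed
    show "\<exists>M. \<forall>m\<ge>M. \<forall>n\<ge>M. norm (zs m - zs n) < e"
    proof (intro exI allI impI)
      fix i j assume ij: "M \<le> i" "M \<le> j"
      have "1 / (real i + 1) \<le> 1 / (real M + 1)" "1 / (real j + 1) \<le> 1 / (real M + 1)"
        using ij by (auto simp: frac_le)
      moreover have "\<mu>/8 * (norm (zs i - zs j))\<^sup>2 \<le> (F (zs i) + F (zs j))/2 - m" using mid zs by simp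
      moreover note zs(2)[of i] zs(2)[of j]
      ultimately have "\<mu>/8 * (norm (zs i - zs j))\<^sup>2 < 1 / (real M + 1)"
        by (rule aux_lin)
      then have "\<mu>/8 * (norm (zs i - zs j))\<^sup>2 < \<mu> * e\<^sup>2 / 8" using M by linarith
      then have "(norm (zs i - zs j))\<^sup>2 < e\<^sup>2" using mu by simp
      then show "norm (zs i - zs j) < e" using e by (simp add: power_less_imp_less_base)
    qed
  qed
  then obtain p where lim: "zs \<longlonglongrightarrow> p" using Cauchy_convergent_iff convergent_def by blast
  have ep: "(zs n, m + 1 / (real n + 1) - \<mu>/2 * (norm (zs n - x))\<^sup>2) \<in> epigraph h" for n
  proof -
    have "h (zs n) < \<infinity>" using zs(1) by (simp add: S_def)
    then obtain r where r: "h (zs n) = ereal r" using G_fin[OF G] by blast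
    have "r \<le> m + 1 / (real n + 1) - \<mu>/2 * (norm (zs n - x))\<^sup>2"
      using zs(2)[of n] r unfolding F_def by simp
    then show ?thesis using r by (simp add: epigraph_def)
  qed
  have lim2: "(\<lambda>n. (zs n, m + 1 / (real n + 1) - \<mu>/2 * (norm (zs n - x))\<^sup>2)) \<longlonglongrightarrow> (p, m + 0 - \<mu>/2 * (norm (p - x))\<^sup>2)"
  proof -
    have "(\<lambda>n. \<mu>/2 * (norm (zs n - x))\<^sup>2) \<longlonglongrightarrow> \<mu>/2 * (norm (p - x))\<^sup>2"
      by (intro tendsto_mult tendsto_const tendsto_power tendsto_norm tendsto_diff lim)
    moreover have "(\<lambda>n. m + 1 / (real n + 1)) \<longlonglongrightarrow> m + 0"
      by (intro tendsto_add tendsto_const lim_1n)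
    ultimately show ?thesis by (intro tendsto_Pair lim tendsto_diff)
  qed
  have "(p, m + 0 - \<mu>/2 * (norm (p - x))\<^sup>2) \<in> epigraph h"
  proof -
    have "closed (epigraph h)" using G by (simp add: Gamma0_def)
    then show ?thesis using ep lim2 by (rule closed_sequentially)
  qed
  then have hp: "h p \<le> ereal (m - \<mu>/2 * (norm (p - x))\<^sup>2)" by (simp add: epigraph_def)
  then have pS: "h p < \<infinity>" by (auto intro: le_less_trans)
  obtain rp where rp: "h p = ereal rp" using G_fin[OF G pS] by blast
  have "real_of_ereal (h p) \<le> m - \<mu>/2 * (norm (p - x))\<^sup>2"
    using hp rp by simp
  then have "F p \<le> m" unfolding F_def by simp
  then show ?thesis using pS mle unfolding F_def S_def by (intro exI[of _ p]) (auto intro: order_trans)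
qed

lemma norm_add_sq:
  fixes a b :: "'a::real_inner"
  shows "(norm (a + t *\<^sub>R b))\<^sup>2 = (norm a)\<^sup>2 + 2 * t * inner a b + t\<^sup>2 * (norm b)\<^sup>2"
  by (simp only: power2_norm_eq_inner) (simp add: inner_add_left inner_add_right inner_commute power2_eq_square algebra_simps)

lemma aux2:
  fixes rp rz ry \<mu> P Z t I Q :: real
  assumes "rp + \<mu>/2*P \<le> rz + \<mu>/2*Z" "Z = P + 2*t*I + t\<^sup>2*Q" "rz \<le> (1-t)*rp + t*ry"
  shows "t*(rp - ry - \<mu>*I) \<le> t*(\<mu>/2*t*Q)"
proof -
  have "\<mu>/2*Z = \<mu>/2*P + t*(\<mu>*I) + t*(\<mu>/2*t*Q)" using assms(2) by (simp add: algebra_simps power2_eq_square)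
  moreover have "(1-t)*rp = rp - t*rp" by (simp add: algebra_simps)
  moreover have "t*(rp - ry - \<mu>*I) = t*rp - t*ry - t*(\<mu>*I)" by (simp add: algebra_simps)
  ultimately show ?thesis using assms(1,3) by linarith
qed

lemma G_min_subdiff:
  fixes h :: "'a::{real_inner,complete_space} \<Rightarrow> ereal"
  assumes G: "Gamma0 h" and mu: "\<mu> > 0" and hp: "h p < \<infinity>"
    and min: "\<forall>z. h z < \<infinity> \<longrightarrow>
     real_of_ereal (h p) + \<mu>/2 * (norm (p - x))\<^sup>2 \<le> real_of_ereal (h z) + \<mu>/2 * (norm (z - x))\<^sup>2"
  shows "\<mu> *\<^sub>R (x - p) \<in> subdiff h p"
proof -
  obtain rp where rp: "h p = ereal rp" using G_fin[OF G hp] by blast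
  have main: "rp + \<mu> * inner (x - p) (y - p) \<le> ry" if hy: "h y = ereal ry" for y ry
  proof -
    define c where "c = rp - ry - \<mu> * inner (p - x) (y - p)"
    have ct: "c \<le> \<mu>/2 * t * (norm (y - p))\<^sup>2" if t: "0 < t" "t \<le> 1" for t
    proof -
      define zt where "zt = (1 - t) *\<^sub>R p + t *\<^sub>R y"
      have hz: "h zt \<le> ereal ((1 - t) * rp + t * ry)"
        using G_conv[OF G hp, of y t] hy rp t by (simp add: zt_def)
      then have zfin: "h zt < \<infinity>" by (auto intro: le_less_trans)
      obtain rz where rz: "h zt = ereal rz" using G_fin[OF G zfin] by blast
      have rzle: "rz \<le> (1 - t) * rp + t * ry" using hz rz by simp
      have m: "rp + \<mu>/2 * (norm (p - x))\<^sup>2 \<le> rz + \<mu>/2 * (norm (zt - x))\<^sup>2"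
        using min[rule_format, OF zfin] rp rz by simp
      have e: "zt - x = (p - x) + t *\<^sub>R (y - p)" by (simp add: zt_def algebra_simps)
      have nz: "(norm (zt - x))\<^sup>2 = (norm (p - x))\<^sup>2 + 2 * t * inner (p - x) (y - p) + t\<^sup>2 * (norm (y - p))\<^sup>2"
        unfolding e by (rule norm_add_sq)
      have "t * c \<le> t * (\<mu>/2 * t * (norm (y - p))\<^sup>2)"
        unfolding c_def by (rule aux2[OF m nz rzle])
      then show ?thesis using t by simp
    qed
    have "c \<le> 0"
    proof (rule ccontr)
      assume "\<not> c \<le> 0"
      then have c: "c > 0" by simp
      define N where "N = \<mu> * (norm (y - p))\<^sup>2"
      have N: "N \<ge> 0" using mu by (simp add: N_def)
      define t where "t = min 1 (c / (N + 1))"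
      have t: "0 < t" "t \<le> 1" using c N by (auto simp: t_def)
      have "\<mu>/2 * t * (norm (y - p))\<^sup>2 = t * N / 2" by (simp add: N_def)
      also have "\<dots> \<le> (c / (N + 1)) * N / 2" using N by (intro divide_right_mono mult_right_mono) (auto simp: t_def)
      also have "\<dots> < c" using c N by (simp add: field_simps) (smt (verit) mult_nonneg_nonneg)
      finally show False using ct[OF t] by simp
    qed
    moreover have "inner (x - p) (y - p) = - inner (p - x) (y - p)"
      by (simp add: inner_diff_left)
    ultimately show ?thesis unfolding c_def by simp
  qed
  show ?thesis unfolding subdiff_def
  proof (safe)
    show "h p = \<infinity> \<Longrightarrow> False" using hp by simp
    show "h p = - \<infinity> \<Longrightarrow> False" using rp by simp
    fix y
    show "h p + ereal (inner (\<mu> *\<^sub>R (x - p)) (y - p)) \<le> h y"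
    proof (cases "h y < \<infinity>")
      case False then show ?thesis by simp
    next
      case True
      obtain ry where ry: "h y = ereal ry" using G_fin[OF G True] by blast
      show ?thesis using main[OF ry] rp ry by simp
    qed
  qed
qed

lemma subdiff_mono:
  assumes "u \<in> subdiff h a" "w \<in> subdiff h b"
  shows "inner (u - w) (a - b) \<ge> 0"
proof -
  from assms obtain ra rb where ra: "h a = ereal ra" and rb: "h b = ereal rb"
    by (cases "h a"; cases "h b") (auto simp: subdiff_def)
  have "h a + ereal (inner u (b - a)) \<le> h b" "h b + ereal (inner w (a - b)) \<le> h a"
    using assms by (auto simp: subdiff_def)
  then have "ra + inner u (b - a) \<le> rb" "rb + inner w (a - b) \<le> ra" using ra rb by auto
  moreover have "inner u (b - a) = - inner u (a - b)" by (simp add: inner_diff_right)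
  ultimately show ?thesis by (simp add: inner_diff_left)
qed

lemma prox_eq:
  assumes "x - p \<in> subdiff h p"
  shows "prox h x = p"
  unfolding prox_def
proof (rule the_equality)
  show "x - p \<in> subdiff h p" by fact
  fix q assume "x - q \<in> subdiff h q"
  from subdiff_mono[OF this assms] have ge: "inner ((x - q) - (x - p)) (q - p) \<ge> 0" .
  have eq: "(x - q) - (x - p) = - (q - p)" by simp
  from ge have "0 \<le> inner (- (q - p)) (q - p)" by (simp only: eq)
  then have "0 \<le> - inner (q - p) (q - p)" by (simp only: inner_minus_left)
  then have "inner (q - p) (q - p) \<le> 0" by linarith
  then have "inner (q - p) (q - p) = 0" using inner_ge_zero[of "q - p"] by linarith
  then show "q = p" by simp
qed

lemma prox_in:
  fixes h :: "'a::{real_inner,complete_space} \<Rightarrow> ereal"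
  assumes G: "Gamma0 h"
  shows "x - prox h x \<in> subdiff h (prox h x)"
proof -
  obtain p where p: "h p < \<infinity>" "\<forall>z. h z < \<infinity> \<longrightarrow>
     real_of_ereal (h p) + 1/2 * (norm (p - x))\<^sup>2 \<le> real_of_ereal (h z) + 1/2 * (norm (z - x))\<^sup>2"
    using G_min[OF G, of 1 x] by auto
  have "1 *\<^sub>R (x - p) \<in> subdiff h p" by (rule G_min_subdiff[OF G _ p(1) p(2)]) simp
  then have "x - p \<in> subdiff h p" by simp
  then have "prox h x = p" by (rule prox_eq)
  then show ?thesis using \<open>x - p \<in> subdiff h p\<close> by simp
qed

definition ind :: "'a set \<Rightarrow> 'a \<Rightarrow> ereal" where
  "ind C z = (if z \<in> C then 0 else \<infinity>)"

lemma Gamma0_ind: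
  fixes C :: "'a::real_normed_vector set"
  assumes "closed C" "convex C" "C \<noteq> {}"
  shows "Gamma0 (ind C)"
proof -
  have e: "epigraph (ind C) = C \<times> {r. 0 \<le> r}"
    by (auto simp: epigraph_def ind_def split: if_splits)
  have "convex {r::real. 0 \<le> r}" by (simp add: convex_real_interval(1)[of 0, unfolded atLeast_def])
  moreover have "closed {r::real. 0 \<le> r}" using closed_atLeast[of "0::real"] by (simp add: atLeast_def)
  ultimately show ?thesis unfolding Gamma0_def e
  proof (intro conjI)
    show "convex (C \<times> {r::real. 0 \<le> r})" using assms(2) \<open>convex {r::real. 0 \<le> r}\<close> by (rule convex_Times)
    show "closed (C \<times> {r::real. 0 \<le> r})" using assms(1) \<open>closed {r::real. 0 \<le> r}\<close> by (rule closed_Times)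
    obtain c where "c \<in> C" using assms(3) by blast
    then show "proper_fun (ind C)" unfolding proper_fun_def ind_def by auto
  qed
qed

lemma norm_diff_sq:
  fixes a b :: "'a::real_inner"
  shows "(norm (a - b))\<^sup>2 = (norm a)\<^sup>2 - 2 * inner a b + (norm b)\<^sup>2"
  by (simp only: power2_norm_eq_inner) (simp add: inner_diff_left inner_diff_right inner_commute)

lemma proj_eq:
  fixes C :: "'a::real_inner set"
  assumes p: "p \<in> C" and vi: "\<forall>z\<in>C. inner (z - p) (x - p) \<le> 0"
  shows "proj C x = p"
  unfolding proj_def
proof (rule the_equality)
  have key: "(dist x z)\<^sup>2 \<ge> (dist x p)\<^sup>2 + (norm (z - p))\<^sup>2" if "z \<in> C" for z
  proof -
    have "(norm ((x - p) - (z - p)))\<^sup>2 = (norm (x - p))\<^sup>2 - 2 * inner (x - p) (z - p) + (norm (z - p))\<^sup>2"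
      by (rule norm_diff_sq)
    then have "(dist x z)\<^sup>2 = (dist x p)\<^sup>2 - 2 * inner (x - p) (z - p) + (norm (z - p))\<^sup>2"
      by (simp add: dist_norm)
    moreover have "inner (x - p) (z - p) \<le> 0" using vi that by (metis inner_commute)
    ultimately show ?thesis by linarith
  qed
  show "p \<in> C \<and> (\<forall>q\<in>C. dist x p \<le> dist x q)"
  proof (intro conjI ballI p)
    fix q assume "q \<in> C"
    then have "(dist x p)\<^sup>2 \<le> (dist x q)\<^sup>2" using key[of q] zero_le_power2[of "norm (q - p)"] by linarith
    then show "dist x p \<le> dist x q" by (rule power2_le_imp_le) simp
  qed
  fix q assume q: "q \<in> C \<and> (\<forall>qa\<in>C. dist x q \<le> dist x qa)"
  then have "dist x q \<le> dist x p" using p by blast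
  then have "(dist x q)\<^sup>2 \<le> (dist x p)\<^sup>2" by (rule power_mono) simp
  then have "(norm (q - p))\<^sup>2 \<le> 0" using key[of q] q by linarith
  then have "norm (q - p) = 0" using zero_le_power2[of "norm (q - p)"] by simp
  then show "q = p" by simp
qed

lemma proj_exists:
  fixes C :: "'a::{real_inner,complete_space} set"
  assumes "closed C" "convex C" "C \<noteq> {}"
  shows "\<exists>p\<in>C. \<forall>z\<in>C. inner (z - p) (x - p) \<le> 0"
proof -
  have G: "Gamma0 (ind C)" using Gamma0_ind[OF assms] .
  define p where "p = prox (ind C) x"
  have s: "x - p \<in> subdiff (ind C) p" using prox_in[OF G] unfolding p_def .
  then have pC: "p \<in> C" by (auto simp: subdiff_def ind_def split: if_splits)
  have ii: "ind C p + ereal (inner (x - p) (z - p)) \<le> ind C z" for z using s by (simp add: subdiff_def)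
  have "ereal (inner (x - p) (z - p)) \<le> 0" if "z \<in> C" for z using ii[of z] pC that by (simp add: ind_def)
  then have "inner (x - p) (z - p) \<le> 0" if "z \<in> C" for z using that by (simp add: zero_ereal_def)
  then show ?thesis using pC by (auto simp: inner_commute)
qed

lemma aux3:
  fixes d e l M B :: real
  assumes e: "e > 0" and l: "l > 0" and M: "M \<ge> 0" and B: "B \<ge> 0" and d: "d \<ge> 0"
    and sq: "d\<^sup>2 \<le> 2 * l * (M + B * d)" and small: "l * (2 * M / e + 2 * B) < e"
  shows "d < e"
proof (rule ccontr)
  assume "\<not> d < e"
  then have de: "e \<le> d" by simp
  then have dpos: "d > 0" using e by simp
  have "1 \<le> d / e" using de e by simp
  then have "M * 1 \<le> M * (d / e)" using M by (rule mult_left_mono)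
  then have "2 * l * (M + B * d) \<le> 2 * l * (M * (d / e) + B * d)" using l by simp
  also have "\<dots> = d * (l * (2 * M / e + 2 * B))" using e by (simp add: field_simps)
  finally have "d * d \<le> d * (l * (2 * M / e + 2 * B))" using sq by (simp add: power2_eq_square)
  then have "d \<le> l * (2 * M / e + 2 * B)" using dpos by simp
  then show False using small de by linarith
qed

lemma subdiff_fin:
  assumes "u \<in> subdiff h a"
  shows "h a = ereal (real_of_ereal (h a))" "h a < \<infinity>"
  using assms by (cases "h a"; auto simp: subdiff_def)+

lemma dom_dense:
  fixes f :: "'a::{real_inner,complete_space} \<Rightarrow> ereal"
  assumes G: "Gamma0 f" and y: "f y < \<infinity>"
  shows "y \<in> closure (dom_subdiff f)"
proof -
  obtain A B where AB: "B \<ge> 0" "\<And>z. ereal (A - B * norm z) \<le> f z" using G_growth[OF G] by blast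
  obtain ry where ry: "f y = ereal ry" using G_fin[OF G y] by blast
  define M where "M = ry - A + B * norm y"
  have M: "M \<ge> 0" using AB(2)[of y] ry by (simp add: M_def)
  show ?thesis unfolding closure_approachable
  proof (intro allI impI)
    fix e :: real assume e: "e > 0"
    define l where "l = e / (2 * M / e + 2 * B + 1)"
    have den: "2 * M / e + 2 * B + 1 > 0" using M AB(1) e by (simp add: add_nonneg_pos)
    have l: "l > 0" using e den by (simp add: l_def)
    have small: "l * (2 * M / e + 2 * B) < e"
    proof -
      have "l * (2 * M / e + 2 * B) < l * (2 * M / e + 2 * B + 1)" using l by simp
      also have "\<dots> = e" using den by (simp add: l_def)
      finally show ?thesis .
    qed
    obtain p where p: "f p < \<infinity>" "\<forall>z. f z < \<infinity> \<longrightarrow>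
       real_of_ereal (f p) + (1/l)/2 * (norm (p - y))\<^sup>2 \<le> real_of_ereal (f z) + (1/l)/2 * (norm (z - y))\<^sup>2"
      using G_min[OF G, of "1/l" y] l by auto
    have sd: "(1/l) *\<^sub>R (y - p) \<in> subdiff f p" using G_min_subdiff[OF G _ p(1) p(2)] l by simp
    then have pd: "p \<in> dom_subdiff f" by (auto simp: dom_subdiff_def)
    obtain rp where rp: "f p = ereal rp" using G_fin[OF G p(1)] by blast
    define d where "d = norm (p - y)"
    have m: "rp + (1/l)/2 * d\<^sup>2 \<le> ry" using p(2)[rule_format, OF y] rp ry by (simp add: d_def)
    have low: "A - B * norm p \<le> rp" using AB(2)[of p] rp by simp
    have "norm p \<le> norm y + d" unfolding d_def by (metis add.commute norm_triangle_sub)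
    then have "B * norm p \<le> B * norm y + B * d" using AB(1) by (metis distrib_left mult_left_mono)
    then have "(1/l)/2 * d\<^sup>2 \<le> M + B * d" using m low unfolding M_def by linarith
    then have "d\<^sup>2 \<le> 2 * l * (M + B * d)" using l by (simp add: field_simps)
    then have "d < e" using aux3[OF e l M AB(1) _ _ small] by (simp add: d_def)
    then show "\<exists>z\<in>dom_subdiff f. dist z y < e" using pd by (auto simp: d_def dist_norm)
  qed
qed

lemma ran_dense:
  fixes f :: "'a::{real_inner,complete_space} \<Rightarrow> ereal"
  assumes G: "Gamma0 f" and K: "\<forall>z. ereal (inner u z - K) \<le> f z"
  shows "u \<in> closure (ran_subdiff f)"
proof -
  obtain z0 where z0: "f z0 < \<infinity>" using G by (auto simp: Gamma0_def proper_fun_def)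
  obtain r0 where r0: "f z0 = ereal r0" using G_fin[OF G z0] by blast
  define M where "M = r0 - inner u z0 + K"
  have M: "M \<ge> 0" using K[rule_format, of z0] r0 by (simp add: M_def)
  define N where "N = 2 * M + (norm z0)\<^sup>2"
  have N: "N \<ge> 0" using M by (simp add: N_def)
  show ?thesis unfolding closure_approachable
  proof (intro allI impI)
    fix e :: real assume e: "e > 0"
    define l where "l = min 1 (e\<^sup>2 / (N + 1))"
    have l: "l > 0" "l \<le> 1" using e N by (auto simp: l_def)
    have lN: "l * N < e\<^sup>2"
    proof -
      have "l * N \<le> (e\<^sup>2 / (N + 1)) * N" using N by (intro mult_right_mono) (auto simp: l_def)
      also have "\<dots> < e\<^sup>2" using N e by (simp add: field_simps)
      finally show ?thesis .
    qed
    define w where "w = (1/l) *\<^sub>R u"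
    obtain p where p: "f p < \<infinity>" "\<forall>z. f z < \<infinity> \<longrightarrow>
       real_of_ereal (f p) + l/2 * (norm (p - w))\<^sup>2 \<le> real_of_ereal (f z) + l/2 * (norm (z - w))\<^sup>2"
      using G_min[OF G l(1), of w] by auto
    have sd: "l *\<^sub>R (w - p) \<in> subdiff f p" using G_min_subdiff[OF G l(1) p(1) p(2)] .
    have eq: "l *\<^sub>R (w - p) = u - l *\<^sub>R p" using l by (simp add: w_def algebra_simps)
    have rs: "u - l *\<^sub>R p \<in> ran_subdiff f" using sd eq by (auto simp: ran_subdiff_def)
    obtain rp where rp: "f p = ereal rp" using G_fin[OF G p(1)] by blast
    have m: "rp + l/2 * (norm (p - w))\<^sup>2 \<le> r0 + l/2 * (norm (z0 - w))\<^sup>2"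
      using p(2)[rule_format, OF z0] rp r0 by simp
    have ex: "l/2 * (norm (z - w))\<^sup>2 = l/2 * (norm z)\<^sup>2 - inner z u + l/2 * (norm w)\<^sup>2" for z
    proof -
      have "l/2 * (norm (z - w))\<^sup>2 = l/2 * ((norm z)\<^sup>2 - 2 * inner z w + (norm w)\<^sup>2)"
        by (simp only: norm_diff_sq)
      also have "\<dots> = l/2 * (norm z)\<^sup>2 - l * inner z w + l/2 * (norm w)\<^sup>2" by (simp add: algebra_simps)
      also have "l * inner z w = inner z u" using l by (simp add: w_def)
      finally show ?thesis .
    qed
    have low: "inner u p - K \<le> rp" using K rp by (metis ereal_less_eq(3))
    have "rp + l/2 * (norm p)\<^sup>2 - inner p u \<le> r0 + l/2 * (norm z0)\<^sup>2 - inner z0 u"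
      using m ex[of p] ex[of z0] by linarith
    then have "l/2 * (norm p)\<^sup>2 \<le> M + l/2 * (norm z0)\<^sup>2" using low unfolding M_def
      by (simp add: inner_commute)
    then have "l * (norm p)\<^sup>2 \<le> 2 * M + l * (norm z0)\<^sup>2" by linarith
    then have "l * (l * (norm p)\<^sup>2) \<le> l * (2 * M + l * (norm z0)\<^sup>2)" using l by (intro mult_left_mono) auto
    then have "l * l * (norm p)\<^sup>2 \<le> l * (2 * M + l * (norm z0)\<^sup>2)" by (simp add: mult.assoc)
    also have "\<dots> \<le> l * N" using l M unfolding N_def
      by (intro mult_left_mono add_left_mono) (auto intro: mult_left_le_one_le)
    finally have A: "l * l * (norm p)\<^sup>2 \<le> l * N" .
    have "(norm (l *\<^sub>R p))\<^sup>2 = l * l * (norm p)\<^sup>2" using l by (simp add: power2_eq_square)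
    then have "(norm (l *\<^sub>R p))\<^sup>2 < e\<^sup>2" using A lN by linarith
    then have "norm (l *\<^sub>R p) < e" using e by (simp add: power_less_imp_less_base)
    then show "\<exists>z\<in>ran_subdiff f. dist z u < e" using rs by (intro bexI[of _ "u - l *\<^sub>R p"]) (auto simp: dist_norm)
  qed
qed

definition Aset :: "('a::real_inner \<Rightarrow> ereal) \<Rightarrow> 'a set" where
  "Aset f = {u. \<exists>K. \<forall>z. ereal (inner u z - K) \<le> f z}"

lemma ran_Aset: "ran_subdiff f \<subseteq> Aset f"
proof
  fix u assume "u \<in> ran_subdiff f"
  then obtain a where a: "u \<in> subdiff f a" by (auto simp: ran_subdiff_def)
  obtain ra where ra: "f a = ereal ra" using subdiff_fin[OF a] by blast
  have "ereal (inner u z - (inner u a - ra)) \<le> f z" for z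
  proof -
    have "f a + ereal (inner u (z - a)) \<le> f z" using a by (simp add: subdiff_def)
    then show ?thesis using ra by (simp add: inner_diff_right algebra_simps)
  qed
  then show "u \<in> Aset f" by (auto simp: Aset_def)
qed

lemma Aset_dense:
  fixes f :: "'a::{real_inner,complete_space} \<Rightarrow> ereal"
  assumes "Gamma0 f"
  shows "Aset f \<subseteq> closure (ran_subdiff f)"
  using ran_dense[OF assms] by (auto simp: Aset_def)

lemma Aset_convex: "convex (Aset f)"
  unfolding convex_alt
proof (intro ballI allI impI)
  fix a b and t :: real assume a: "a \<in> Aset f" and b: "b \<in> Aset f" and t: "0 \<le> t \<and> t \<le> 1"
  obtain Ka where Ka: "\<forall>z. ereal (inner a z - Ka) \<le> f z" using a by (auto simp: Aset_def)
  obtain Kb where Kb: "\<forall>z. ereal (inner b z - Kb) \<le> f z" using b by (auto simp: Aset_def)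
  have "ereal (inner ((1 - t) *\<^sub>R a + t *\<^sub>R b) z - ((1 - t) * Ka + t * Kb)) \<le> f z" for z
  proof -
    have e: "inner ((1 - t) *\<^sub>R a + t *\<^sub>R b) z - ((1 - t) * Ka + t * Kb)
        = (1 - t) * (inner a z - Ka) + t * (inner b z - Kb)"
      by (simp add: inner_add_left algebra_simps)
    have "(1 - t) * (inner a z - Ka) + t * (inner b z - Kb) \<le> max (inner a z - Ka) (inner b z - Kb)"
      using t by (smt (verit) convex_bound_le max.cobounded1 max.cobounded2)
    moreover have "ereal (max (inner a z - Ka) (inner b z - Kb)) \<le> f z" using Ka Kb
      by (simp add: max_def)
    ultimately show ?thesis unfolding e by (meson ereal_less_eq(3) order_trans)
  qed
  then show "(1 - t) *\<^sub>R a + t *\<^sub>R b \<in> Aset f" by (auto simp: Aset_def)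
qed

lemma Aset_shift:
  assumes u: "u \<in> Aset g" and Kv: "\<forall>b. g b < \<infinity> \<longrightarrow> inner v b \<le> Kv"
  shows "u + v \<in> Aset g"
proof -
  obtain K where K: "\<forall>z. ereal (inner u z - K) \<le> g z" using u by (auto simp: Aset_def)
  have "ereal (inner (u + v) z - (K + Kv)) \<le> g z" for z
  proof (cases "g z < \<infinity>")
    case True
    then have "inner (u + v) z - (K + Kv) \<le> inner u z - K" using Kv by (simp add: inner_add_left)
    then show ?thesis using K by (meson ereal_less_eq(3) order_trans)
  qed simp
  then show ?thesis by (auto simp: Aset_def)
qed

lemma closure_add_mem:
  fixes a b :: "'a::real_normed_vector"
  assumes "a \<in> closure A" "b \<in> closure B"
  shows "a + b \<in> closure {x + y | x y. x \<in> A \<and> y \<in> B}"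
  unfolding closure_approachable
proof (intro allI impI)
  fix e :: real assume e: "e > 0"
  obtain x where x: "x \<in> A" "dist x a < e/2" using assms(1) e unfolding closure_approachable by (meson half_gt_zero)
  obtain y where y: "y \<in> B" "dist y b < e/2" using assms(2) e unfolding closure_approachable by (meson half_gt_zero)
  have "dist (x + y) (a + b) = norm ((x - a) + (y - b))" by (simp add: dist_norm algebra_simps)
  also have "\<dots> \<le> norm (x - a) + norm (y - b)" by (rule norm_triangle_ineq)
  finally have "dist (x + y) (a + b) \<le> dist x a + dist y b" by (simp add: dist_norm)
  then show "\<exists>z\<in>{x + y | x y. x \<in> A \<and> y \<in> B}. dist z (a + b) < e" using x y by fastforce
qed

lemma closure_diff_mem:
  fixes a b :: "'a::real_normed_vector"
  assumes "a \<in> closure A" "b \<in> closure B"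
  shows "a - b \<in> closure {x - y | x y. x \<in> A \<and> y \<in> B}"
  unfolding closure_approachable
proof (intro allI impI)
  fix e :: real assume e: "e > 0"
  obtain x where x: "x \<in> A" "dist x a < e/2" using assms(1) e unfolding closure_approachable by (meson half_gt_zero)
  obtain y where y: "y \<in> B" "dist y b < e/2" using assms(2) e unfolding closure_approachable by (meson half_gt_zero)
  have "dist (x - y) (a - b) = norm ((x - a) - (y - b))" by (simp add: dist_norm algebra_simps)
  also have "\<dots> \<le> norm (x - a) + norm (y - b)" by (rule norm_triangle_ineq4)
  finally have "dist (x - y) (a - b) \<le> dist x a + dist y b" by (simp add: dist_norm)
  then show "\<exists>z\<in>{x - y | x y. x \<in> A \<and> y \<in> B}. dist z (a - b) < e" using x y by fastforce
qed

lemma edom_convex: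
  fixes h :: "'a::real_normed_vector \<Rightarrow> ereal"
  assumes G: "Gamma0 h"
  shows "convex (edom h)"
  unfolding convex_alt
proof (intro ballI allI impI)
  fix a b and t :: real assume a: "a \<in> edom h" and b: "b \<in> edom h" and t: "0 \<le> t \<and> t \<le> 1"
  have "h ((1 - t) *\<^sub>R a + t *\<^sub>R b) \<le> ereal ((1 - t) * real_of_ereal (h a) + t * real_of_ereal (h b))"
    using G_conv[OF G, of a b t] a b t by (simp add: edom_def)
  then show "(1 - t) *\<^sub>R a + t *\<^sub>R b \<in> edom h" by (auto simp: edom_def intro: le_less_trans)
qed

lemma prox_conj:
  fixes f :: "'a::{real_inner,complete_space} \<Rightarrow> ereal"
  assumes G: "Gamma0 f"
  shows "prox (fconj f) x = x - prox f x"
proof -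
  define p where "p = prox f x"
  define u where "u = x - p"
  have su: "u \<in> subdiff f p" using prox_in[OF G] by (simp add: u_def p_def)
  obtain rp where rp: "f p = ereal rp" using subdiff_fin[OF su] by blast
  have sg: "rp + inner u (z - p) \<le> rz" if "f z = ereal rz" for z rz
    using su that rp by (simp add: subdiff_def) (metis ereal_less_eq(3) plus_ereal.simps(1))
  have fc: "fconj f u = ereal (inner u p - rp)"
    unfolding fconj_def
  proof (rule antisym)
    show "(SUP z. ereal (inner u z) - f z) \<le> ereal (inner u p - rp)"
    proof (rule SUP_least)
      fix z
      show "ereal (inner u z) - f z \<le> ereal (inner u p - rp)"
      proof (cases "f z")
        case (real rz)
        then show ?thesis using sg[OF real] by (simp add: inner_diff_right)
      next
        case PInf then show ?thesis by simp
      next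
        case MInf then show ?thesis using G by (simp add: Gamma0_def proper_fun_def)
      qed
    qed
    show "ereal (inner u p - rp) \<le> (SUP z. ereal (inner u z) - f z)"
      using SUP_upper[of p UNIV "\<lambda>z. ereal (inner u z) - f z"] rp by simp
  qed
  have "x - u \<in> subdiff (fconj f) u"
    unfolding subdiff_def
  proof (safe)
    show "fconj f u = \<infinity> \<Longrightarrow> False" using fc by simp
    show "fconj f u = - \<infinity> \<Longrightarrow> False" using fc by simp
    fix w
    have "ereal (inner w p) - f p \<le> fconj f w"
      unfolding fconj_def by (rule SUP_upper) simp
    moreover have "fconj f u + ereal (inner (x - u) (w - u)) = ereal (inner w p) - f p"
      using fc rp by (simp add: u_def inner_diff_right inner_commute algebra_simps)
    ultimately show "fconj f u + ereal (inner (x - u) (w - u)) \<le> fconj f w" by simp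
  qed
  then have "prox (fconj f) x = u" by (rule prox_eq)
  then show ?thesis by (simp add: u_def p_def)
qed

lemma dom_subdiff_edom: "dom_subdiff f \<subseteq> edom f"
  using subdiff_fin(2) by (fastforce simp: dom_subdiff_def edom_def)

theorem lemma6p3:
  fixes f g :: "'a::{real_inner, complete_space} \<Rightarrow> ereal"
    and T :: "'a \<Rightarrow> 'a" and v x y :: 'a and D R :: "'a set"
  assumes f: "Gamma0 f" and g: "Gamma0 g"
    and T_def: "T = (\<lambda>z. z - prox f z + prox g (rrefl f z))"
    and v_def: "v = proj (closure (range (\<lambda>z. z - T z))) 0"
    and D_def: "D = {a - b | a b. a \<in> dom_subdiff f \<and> b \<in> dom_subdiff g}"
    and R_def: "R = {a + b | a b. a \<in> ran_subdiff f \<and> b \<in> ran_subdiff g}"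
    and h1: "closure (range (\<lambda>z. z - T z)) = closure (D \<inter> R)"
    and h2: "closure (D \<inter> R) = closure D \<inter> closure R"
    and h3: "proj (closure R) 0 = 0"
    and y: "y \<in> edom f \<inter> ((\<lambda>z. v + z) ` edom g)"
  shows "0 \<ge> inner (y - prox f x) v
    \<and> f y \<ge> f (prox f x) + ereal (inner (y - prox f x) (v + prox (fconj f) x))
    \<and> g (y - v) \<ge> g (prox g (rrefl f x))
           + ereal (inner (y - prox g (rrefl f x) - v) (prox f x - prox g (rrefl f x) - v))
           + ereal (inner (- y + v + prox g (rrefl f x)) (v + prox (fconj f) x))"
proof -
  define p where "p = prox f x"
  define u where "u = x - p"
  have su: "u \<in> subdiff f p" using prox_in[OF f] by (simp add: u_def p_def)
  define q where "q = prox g (rrefl f x)"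
  define w where "w = rrefl f x - q"
  have sw: "w \<in> subdiff g q" using prox_in[OF g] by (simp add: w_def q_def)
  have wexp: "w = (2 *\<^sub>R p - x) - q" by (simp add: w_def rrefl_def p_def)
  have pconj: "prox (fconj f) x = u" using prox_conj[OF f] by (simp add: u_def p_def)
  obtain rp where rp: "f p = ereal rp" using subdiff_fin[OF su] by blast
  obtain rq where rq: "g q = ereal rq" using subdiff_fin[OF sw] by blast
  have pdom: "p \<in> edom f" using rp by (simp add: edom_def)
  have qdom: "q \<in> edom g" using rq by (simp add: edom_def)
  define C0 where "C0 = {a - b | a b. a \<in> edom f \<and> b \<in> edom g}"
  define C where "C = closure C0"
  have "C0 = (\<Union>a\<in>edom f. \<Union>b\<in>edom g. {a - b})" by (auto simp: C0_def)
  then have C0conv: "convex C0" using convex_differences[OF edom_convex[OF f] edom_convex[OF g]] by simp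
  have pqC0: "p - q \<in> C0" using pdom qdom by (auto simp: C0_def)
  have Cconv: "convex C" using C0conv by (simp add: C_def)
  have Ccl: "closed C" by (simp add: C_def)
  have Cne: "C \<noteq> {}" using pqC0 closure_subset by (auto simp: C_def)
  obtain vD where vD: "vD \<in> C" "\<forall>z\<in>C. inner (z - vD) (0 - vD) \<le> 0"
    using proj_exists[OF Ccl Cconv Cne] by blast
  have vi: "inner (z - vD) vD \<ge> 0" if "z \<in> C" for z
    using vD(2) that by (simp add: inner_diff_right)
  have viC0: "inner (z - vD) vD \<ge> 0" if "z \<in> C0" for z
    using vi that closure_subset by (auto simp: C_def)
  have DC0: "D \<subseteq> C0" using dom_subdiff_edom unfolding D_def C0_def by blast
  have C0D: "C0 \<subseteq> closure D"
  proof
    fix z assume "z \<in> C0"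
    then obtain a b where ab: "z = a - b" "a \<in> edom f" "b \<in> edom g" by (auto simp: C0_def)
    have "a \<in> closure (dom_subdiff f)" using dom_dense[OF f] ab(2) by (simp add: edom_def)
    moreover have "b \<in> closure (dom_subdiff g)" using dom_dense[OF g] ab(3) by (simp add: edom_def)
    ultimately show "z \<in> closure D" unfolding D_def ab(1) by (rule closure_diff_mem)
  qed
  have clD: "closure D = C"
  proof
    show "closure D \<subseteq> C" using DC0 by (simp add: C_def closure_mono)
    show "C \<subseteq> closure D" unfolding C_def using C0D by (simp add: closure_minimal)
  qed
  have Kv: "\<forall>b. g b < \<infinity> \<longrightarrow> inner vD b \<le> inner p vD - inner vD vD"
  proof (intro allI impI)
    fix b assume "g b < \<infinity>"
    then have "p - b \<in> C0" using pdom by (auto simp: C0_def edom_def)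
    then have "inner (p - b - vD) vD \<ge> 0" by (rule viC0)
    moreover have "inner (p - b - vD) vD = inner p vD - inner b vD - inner vD vD" by (simp add: inner_diff_left)
    moreover have "inner vD b = inner b vD" by (rule inner_commute)
    ultimately show "inner vD b \<le> inner p vD - inner vD vD" by linarith
  qed
  define R' where "R' = {a + b | a b. a \<in> Aset f \<and> b \<in> Aset g}"
  have RR': "R \<subseteq> R'" using ran_Aset unfolding R_def R'_def by blast
  have R'R: "R' \<subseteq> closure R"
  proof
    fix z assume "z \<in> R'"
    then obtain a b where ab: "z = a + b" "a \<in> Aset f" "b \<in> Aset g" by (auto simp: R'_def)
    have "a \<in> closure (ran_subdiff f)" using Aset_dense[OF f] ab(2) by blast
    moreover have "b \<in> closure (ran_subdiff g)" using Aset_dense[OF g] ab(3) by blast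
    ultimately show "z \<in> closure R" unfolding R_def ab(1) by (rule closure_add_mem)
  qed
  have clR: "closure R = closure R'"
  proof
    show "closure R \<subseteq> closure R'" using RR' by (rule closure_mono)
    show "closure R' \<subseteq> closure R" using R'R by (simp add: closure_minimal)
  qed
  have "R' = (\<Union>a\<in>Aset f. \<Union>b\<in>Aset g. {a + b})" by (auto simp: R'_def)
  then have R'conv: "convex R'" using convex_sums[OF Aset_convex Aset_convex] by simp
  have "u + w \<in> R" using su sw unfolding R_def ran_subdiff_def by blast
  then have clRne: "closure R \<noteq> {}" using closure_subset by blast
  have clRconv: "convex (closure R)" using R'conv clR by simp
  obtain p0 where p0: "p0 \<in> closure R" "\<forall>z\<in>closure R. inner (z - p0) (0 - p0) \<le> 0"
    using proj_exists[OF closed_closure clRconv clRne] by blast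
  have "proj (closure R) 0 = p0" using proj_eq[OF p0] .
  then have "p0 = 0" using h3 by simp
  then have zR': "0 \<in> closure R'" using p0(1) clR by simp
  have vDR: "vD \<in> closure R"
    unfolding clR closure_approachable
  proof (intro allI impI)
    fix e :: real assume e: "e > 0"
    obtain r where r: "r \<in> R'" "dist r 0 < e" using zR' e unfolding closure_approachable by blast
    then obtain a b where ab: "r = a + b" "a \<in> Aset f" "b \<in> Aset g" by (auto simp: R'_def)
    have "b + vD \<in> Aset g" using Aset_shift[OF ab(3) Kv] .
    moreover have "r + vD = a + (b + vD)" using ab(1) by (simp add: add.assoc)
    ultimately have "r + vD \<in> R'" using ab(2) unfolding R'_def by blast
    moreover have "dist (r + vD) vD = dist r 0" by (simp add: dist_norm)
    ultimately show "\<exists>z\<in>R'. dist z vD < e" using r(2) by (intro bexI[of _ "r + vD"]) auto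
  qed
  define S where "S = closure (range (\<lambda>z. z - T z))"
  have vS: "vD \<in> S" unfolding S_def h1 h2 clD using vD(1) vDR by simp
  have SC: "S \<subseteq> C" unfolding S_def h1 using closure_mono[of "D \<inter> R" D] clD by auto
  have "proj S 0 = vD" using vS vD(2) SC by (intro proj_eq) auto
  then have vv: "v = vD" using v_def S_def by simp
  have yf: "y \<in> edom f" and yv: "y - v \<in> edom g" using y by auto
  have "p - (y - v) \<in> C0" using pdom yv by (auto simp: C0_def)
  then have i1: "inner (p - (y - v) - vD) vD \<ge> 0" by (rule viC0)
  have "p - (y - v) - vD = p - y" using vv by simp
  then have "inner (p - y) v \<ge> 0" using i1 vv by simp
  then have c1: "inner (y - p) v \<le> 0" by (simp add: inner_diff_left)
  have "y - q \<in> C0" using yf qdom by (auto simp: C0_def)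
  then have "inner (y - q - vD) vD \<ge> 0" by (rule viC0)
  then have c2: "inner (y - q - v) v \<ge> 0" using vv by simp
  obtain ry where ry: "f y = ereal ry" using yf G_fin[OF f] by (auto simp: edom_def)
  obtain ryv where ryv: "g (y - v) = ereal ryv" using yv G_fin[OF g] by (auto simp: edom_def)
  have s1: "rp + inner u (y - p) \<le> ry"
    using su rp ry by (simp add: subdiff_def) (metis ereal_less_eq(3) plus_ereal.simps(1))
  have s2: "rq + inner w ((y - v) - q) \<le> ryv"
    using sw rq ryv by (simp add: subdiff_def) (metis ereal_less_eq(3) plus_ereal.simps(1))
  have claim2: "f y \<ge> f p + ereal (inner (y - p) (v + u))"
  proof -
    have "inner (y - p) (v + u) = inner (y - p) v + inner u (y - p)" by (simp add: inner_add_right inner_commute)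
    then show ?thesis using rp ry s1 c1 by simp
  qed
  define a where "a = y - q - v"
  have e1: "- y + v + q = - a" by (simp add: a_def)
  have e2: "(p - q - v) - (v + u) = w - 2 *\<^sub>R v" by (simp add: wexp u_def algebra_simps scaleR_2)
  have AB: "inner (y - q - v) (p - q - v) + inner (- y + v + q) (v + u) = inner w ((y - v) - q) - 2 * inner (y - q - v) v"
  proof -
    have "inner (y - q - v) (p - q - v) + inner (- y + v + q) (v + u) = inner a (p - q - v) - inner a (v + u)"
      unfolding e1 inner_minus_left by (simp add: a_def)
    also have "\<dots> = inner a ((p - q - v) - (v + u))" by (rule inner_diff_right[symmetric])
    also have "\<dots> = inner a w - 2 * inner a v" unfolding e2 by (simp add: inner_diff_right)
    also have "\<dots> = inner w ((y - v) - q) - 2 * inner (y - q - v) v" by (simp add: a_def inner_commute algebra_simps)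
    finally show ?thesis .
  qed
  have claim3: "g (y - v) \<ge> g q + ereal (inner (y - q - v) (p - q - v)) + ereal (inner (- y + v + q) (v + u))"
    using rq ryv s2 c2 AB by simp
  have pf: "prox f x = p" by (simp add: p_def)
  have qf: "prox g (rrefl f x) = q" by (simp add: q_def)
  show ?thesis unfolding pconj qf pf using c1 claim2 claim3 by simp
qed

end
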